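(* Let $G$ be a finite abstract simplicial complex. Then $$\sum_{x \in G} w(x)\, w(U(x)) = w(G).$$
   Context: A finite abstract simplicial complex $G$ is a finite set of non-empty finite sets such that every non-empty subset of an element of $G$ is again in $G$. For $x \in G$, $\dim(x)=|x|-1$ and $w(x)=(-1)^{\dim(x)}$. For a subset $A\subset G$, $w(A)=\sum_{x\in A} w(x)$ (the Euler characteristic of $A$), and in particular $w(G)=\sum_{x\in G}w(x)$. The star of $x\in G$ is $U(x)=\{y \in G : x \subset y\}$. *)

theory Defs
  imports Main
begin

definition simplicial_complex :: "'a set set \<Rightarrow> bool" where
  "simplicial_complex G \<longleftrightarrow> finite G \<and>
     (\<forall>x\<in>G. x \<noteq> {} \<and> finite x \<and> (\<forall>y. y \<noteq> {} \<and> y \<subseteq> x \<longrightarrow> y \<in> G))"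

definition sdim :: "'a set \<Rightarrow> int" where
  "sdim x = int (card x) - 1"

definition w :: "'a set \<Rightarrow> int" where
  "w x = (-1) ^ nat (sdim x)"

definition wset :: "'a set set \<Rightarrow> int" where
  "wset A = (\<Sum>x\<in>A. w x)"

definition star :: "'a set set \<Rightarrow> 'a set \<Rightarrow> 'a set set" where
  "star G x = {y \<in> G. x \<subseteq> y}"

end

theory Submission
  imports Defs
begin

lemma alt_sum_pow:
  assumes "finite y"
  shows "(\<Sum>x\<in>Pow y. (-1::int) ^ card x) = (if y = {} then 1 else 0)"
  using assms
proof (induction y rule: finite_induct)
  case empty
  then show ?case by simp
next
  case (insert a F)
  have "Pow (insert a F) = Pow F \<union> insert a ` Pow F" by (rule Pow_insert)
  moreover have "Pow F \<inter> insert a ` Pow F = {}" using insert by auto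
  moreover have "inj_on (insert a) (Pow F)" using insert
    by (intro inj_onI) (metis PowD insert.hyps(2) insert_ident subsetD)
  ultimately have "(\<Sum>x\<in>Pow (insert a F). (-1::int) ^ card x)
     = (\<Sum>x\<in>Pow F. (-1::int) ^ card x) + (\<Sum>x\<in>insert a ` Pow F. (-1::int) ^ card x)"
    using insert by (metis (no_types, lifting) finite_Pow_iff finite_imageI sum.union_disjoint)
  also have "(\<Sum>x\<in>insert a ` Pow F. (-1::int) ^ card x) = (\<Sum>x\<in>Pow F. (-1::int) ^ card (insert a x))"
    using \<open>inj_on (insert a) (Pow F)\<close> by (simp add: sum.reindex)
  also have "(\<Sum>x\<in>Pow F. (-1::int) ^ card (insert a x)) = - (\<Sum>x\<in>Pow F. (-1::int) ^ card x)"
    unfolding sum_negf[symmetric]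
  proof (rule sum.cong)
    fix x assume "x \<in> Pow F"
    then have "finite x" "a \<notin> x" using insert finite_subset by auto
    then show "(-1::int) ^ card (insert a x) = - ((-1) ^ card x)" by simp
  qed simp
  finally show ?case by simp
qed

lemma w_nonempty:
  assumes "finite x" "x \<noteq> {}"
  shows "w x = - ((-1::int) ^ card x)"
proof -
  obtain n where n: "card x = Suc n" using assms
    by (metis card_eq_0_iff not0_implies_Suc)
  have "nat (sdim x) = n" unfolding sdim_def n by simp
  then show ?thesis unfolding w_def n by simp
qed

lemma w_sum_faces:
  assumes "finite y" "y \<noteq> {}"
  shows "(\<Sum>x\<in>Pow y - {{}}. w x) = 1"
proof -
  have "(\<Sum>x\<in>Pow y - {{}}. w x) = (\<Sum>x\<in>Pow y - {{}}. - ((-1::int) ^ card x))"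
    by (rule sum.cong) (auto intro: w_nonempty finite_subset[OF _ assms(1)])
  also have "\<dots> = - ((\<Sum>x\<in>Pow y. (-1::int) ^ card x) - 1)"
    using assms by (simp add: sum_negf sum_diff1)
  also have "\<dots> = 1" using alt_sum_pow[OF assms(1)] assms by simp
  finally show ?thesis .
qed

theorem mainTheorem1:
  fixes G :: "'a set set"
  assumes "simplicial_complex G"
  shows "(\<Sum>x\<in>G. w x * wset (star G x)) = wset G"
proof -
  have fin: "finite G" using assms unfolding simplicial_complex_def by auto
  have "(\<Sum>x\<in>G. w x * wset (star G x)) = (\<Sum>x\<in>G. \<Sum>y\<in>{y. y \<in> G \<and> x \<subseteq> y}. w x * w y)"
    unfolding wset_def star_def by (simp add: sum_distrib_left)
  also have "\<dots> = (\<Sum>y\<in>G. \<Sum>x\<in>{x. x \<in> G \<and> x \<subseteq> y}. w x * w y)"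
    by (rule sum.swap_restrict[OF fin fin])
  also have "\<dots> = (\<Sum>y\<in>G. w y)"
  proof (rule sum.cong)
    fix y assume y: "y \<in> G"
    have yp: "finite y" "y \<noteq> {}" using assms y unfolding simplicial_complex_def by auto
    have "{x. x \<in> G \<and> x \<subseteq> y} = Pow y - {{}}"
    proof
      have ne: "\<forall>x\<in>G. x \<noteq> {}" using assms unfolding simplicial_complex_def by blast
      show "{x. x \<in> G \<and> x \<subseteq> y} \<subseteq> Pow y - {{}}"
        using ne by blast
      have cl: "\<forall>z. z \<noteq> {} \<and> z \<subseteq> y \<longrightarrow> z \<in> G"
        using assms y unfolding simplicial_complex_def by blast
      show "Pow y - {{}} \<subseteq> {x. x \<in> G \<and> x \<subseteq> y}"
        using cl by blast
    qed
    then have "(\<Sum>x\<in>{x. x \<in> G \<and> x \<subseteq> y}. w x * w y) = (\<Sum>x\<in>Pow y - {{}}. w x) * w y"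
      by (simp add: sum_distrib_right)
    then show "(\<Sum>x\<in>{x. x \<in> G \<and> x \<subseteq> y}. w x * w y) = w y"
      using w_sum_faces[OF yp] by simp
  qed simp
  finally show ?thesis unfolding wset_def .
qed

end
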